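(* If $G$ is a gate and $v\in V(G)$, then $v$ belongs to exactly two cliques of $G$, and if $C_1$ and $C_2$ are these two cliques then $C_1\cap C_2=\{v\}$.
   Context: All graphs are finite and simple. A clique is a maximal complete set of vertices. Gates are defined recursively: (i) every chordless cycle $C_n$ with $n\geq 4$ is a gate; (ii) if $H$ is a gate, $C$ and $C'$ are disjoint cliques of $H$, and $P=(v_1,\dots,v_l)$ with $l\geq 2$ is a chordless path vertex-disjoint from $H$, then the union of $H$ and $P$ together with all edges between $v_1$ and the vertices of $C$ and all edges between $v_l$ and the vertices of $C'$ is a gate; (iii) there are no other gates. *)

theory Defs
  imports Main
begin

text \<open>A simple graph is given by a vertex set V and a set E of 2-element edge sets.\<close>

definition complete_set :: "'a set \<Rightarrow> 'a set set \<Rightarrow> 'a set \<Rightarrow> bool" where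
  "complete_set V E S \<longleftrightarrow> S \<subseteq> V \<and> (\<forall>x\<in>S. \<forall>y\<in>S. x \<noteq> y \<longrightarrow> {x, y} \<in> E)"

definition is_clique :: "'a set \<Rightarrow> 'a set set \<Rightarrow> 'a set \<Rightarrow> bool" where
  "is_clique V E C \<longleftrightarrow> complete_set V E C \<and> (\<forall>S. complete_set V E S \<and> C \<subseteq> S \<longrightarrow> S = C)"

definition cycle_edges :: "'a list \<Rightarrow> 'a set set" where
  "cycle_edges vs = {{vs ! i, vs ! (Suc i mod length vs)} | i. i < length vs}"

definition path_edges :: "'a list \<Rightarrow> 'a set set" where
  "path_edges ps = {{ps ! i, ps ! Suc i} | i. Suc i < length ps}"

inductive gate :: "'a set \<Rightarrow> 'a set set \<Rightarrow> bool" where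
  cycle: "distinct vs \<Longrightarrow> length vs \<ge> 4 \<Longrightarrow> gate (set vs) (cycle_edges vs)"
| extend: "gate V E \<Longrightarrow> is_clique V E C \<Longrightarrow> is_clique V E C' \<Longrightarrow> C \<inter> C' = {} \<Longrightarrow>
    distinct ps \<Longrightarrow> length ps \<ge> 2 \<Longrightarrow> set ps \<inter> V = {} \<Longrightarrow>
    gate (V \<union> set ps)
         (E \<union> path_edges ps \<union> {{hd ps, c} | c. c \<in> C} \<union> {{last ps, c} | c. c \<in> C'})"

end

theory Submission imports Defs begin

definition edges_ok :: "'a set \<Rightarrow> 'a set set \<Rightarrow> bool" where
  "edges_ok V E \<longleftrightarrow> (\<forall>e\<in>E. \<exists>x y. e = {x,y} \<and> x \<noteq> y \<and> x \<in> V \<and> y \<in> V)"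

lemma edges_okD:
  assumes "edges_ok V E" "{x,y} \<in> E"
  shows "x \<noteq> y \<and> x \<in> V \<and> y \<in> V"
proof -
  obtain a b where "{x,y} = {a,b}" "a \<noteq> b" "a \<in> V" "b \<in> V"
    using assms unfolding edges_ok_def by blast
  then show ?thesis by (auto simp: doubleton_eq_iff)
qed

lemma clique_sub: "is_clique V E C \<Longrightarrow> C \<subseteq> V"
  by (simp add: is_clique_def complete_set_def)

lemma clique_ne: "is_clique V E C \<Longrightarrow> x \<in> V \<Longrightarrow> C \<noteq> {}"
proof
  assume c: "is_clique V E C" "x \<in> V" "C = {}"
  have "complete_set V E {x}" using c by (simp add: complete_set_def)
  with c show False unfolding is_clique_def by blast
qed

lemma star:
  assumes ok: "edges_ok V E" and vV: "v \<in> V"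
  and N: "\<And>u. {v,u} \<in> E \<longleftrightarrow> u \<in> insert b A"
  and bA: "b \<notin> A" and Ane: "A \<noteq> {}"
  and Acomp: "\<forall>x\<in>A. \<forall>y\<in>A. x \<noteq> y \<longrightarrow> {x,y} \<in> E"
  and bnot: "\<forall>a\<in>A. {a,b} \<notin> E"
  shows "\<exists>C1 C2. C1 \<noteq> C2 \<and> {C. is_clique V E C \<and> v \<in> C} = {C1, C2} \<and> C1 \<inter> C2 = {v}"
proof -
  have ok': "\<And>x y. {x,y} \<in> E \<Longrightarrow> x \<noteq> y \<and> x \<in> V \<and> y \<in> V" using edges_okD[OF ok] by blast
  have vb: "{v,b} \<in> E" using N by simp
  have vA: "\<And>a. a \<in> A \<Longrightarrow> {v,a} \<in> E" using N by simp
  have "v \<notin> A" using vA ok' by blast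
  have "v \<noteq> b" using vb ok' by blast
  have AV: "A \<subseteq> V" using vA ok' by blast
  have bV: "b \<in> V" using vb ok' by blast
  define C1 where "C1 = insert v A"
  define C2 where "C2 = {v,b}"
  have comp1: "complete_set V E C1" unfolding C1_def complete_set_def
    using AV vV vA Acomp by (auto simp: insert_commute)
  have comp2: "complete_set V E C2" unfolding C2_def complete_set_def
    using bV vV vb by (auto simp: insert_commute)
  obtain a0 where a0: "a0 \<in> A" using Ane by blast
  have cl1: "is_clique V E C1" unfolding is_clique_def
  proof (intro conjI allI impI comp1)
    fix S assume S: "complete_set V E S \<and> C1 \<subseteq> S"
    have "S \<subseteq> C1"
    proof
      fix u assume u: "u \<in> S"
      show "u \<in> C1"
      proof (rule ccontr)
        assume "u \<notin> C1"
        then have "u \<noteq> v" "{v,u} \<in> E" using S u unfolding C1_def complete_set_def by auto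
        then have "u = b" using N \<open>u \<notin> C1\<close> unfolding C1_def by auto
        have "a0 \<in> S" "a0 \<noteq> b" using S a0 bA unfolding C1_def by auto
        then have "{a0,b} \<in> E" using S u \<open>u = b\<close> unfolding complete_set_def by auto
        then show False using bnot a0 by blast
      qed
    qed
    then show "S = C1" using S by blast
  qed
  have cl2: "is_clique V E C2" unfolding is_clique_def
  proof (intro conjI allI impI comp2)
    fix S assume S: "complete_set V E S \<and> C2 \<subseteq> S"
    have "S \<subseteq> C2"
    proof
      fix u assume u: "u \<in> S"
      show "u \<in> C2"
      proof (rule ccontr)
        assume "u \<notin> C2"
        then have "u \<noteq> v" "{v,u} \<in> E" using S u unfolding C2_def complete_set_def by auto
        then have "u \<in> A" using N \<open>u \<notin> C2\<close> unfolding C2_def by auto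
        have "{u,b} \<in> E" using S u \<open>u \<notin> C2\<close> unfolding complete_set_def C2_def by auto
        then show False using bnot \<open>u \<in> A\<close> by blast
      qed
    qed
    then show "S = C2" using S by blast
  qed
  have "{C. is_clique V E C \<and> v \<in> C} = {C1, C2}"
  proof (intro equalityI subsetI)
    fix K assume "K \<in> {C. is_clique V E C \<and> v \<in> C}"
    then have K: "is_clique V E K" "v \<in> K" by auto
    have Ksub: "K \<subseteq> insert v (insert b A)"
    proof
      fix u assume "u \<in> K"
      show "u \<in> insert v (insert b A)"
      proof (cases "u = v")
        case False
        then have "{v,u} \<in> E" using K \<open>u \<in> K\<close> unfolding is_clique_def complete_set_def by auto
        then show ?thesis using N by auto
      qed simp
    qed
    show "K \<in> {C1, C2}"
    proof (cases "b \<in> K")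
      case True
      have "K \<subseteq> C2"
      proof
        fix u assume u: "u \<in> K"
        show "u \<in> C2"
        proof (rule ccontr)
          assume "u \<notin> C2"
          then have "u \<in> A" "u \<noteq> b" using Ksub u unfolding C2_def by auto
          then have "{u,b} \<in> E" using K True u unfolding is_clique_def complete_set_def by auto
          then show False using bnot \<open>u \<in> A\<close> by blast
        qed
      qed
      then have "C2 = K" using K comp2 unfolding is_clique_def by blast
      then show ?thesis by simp
    next
      case False
      then have "K \<subseteq> C1" using Ksub unfolding C1_def by auto
      then have "C1 = K" using K comp1 unfolding is_clique_def by blast
      then show ?thesis by simp
    qed
  next
    fix K assume "K \<in> {C1, C2}"
    then show "K \<in> {C. is_clique V E C \<and> v \<in> C}" using cl1 cl2 unfolding C1_def C2_def by auto
  qed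
  moreover have "C1 \<noteq> C2" using bA \<open>v \<noteq> b\<close> unfolding C1_def C2_def by auto
  moreover have "C1 \<inter> C2 = {v}" using bA \<open>v \<noteq> b\<close> unfolding C1_def C2_def by auto
  ultimately show ?thesis by blast
qed

lemma mod_lt: "k < (n::nat) \<Longrightarrow> Suc k mod n < n"
  by (rule mod_less_divisor) simp

lemma suc_mod: "j < n \<Longrightarrow> Suc j mod n = (if Suc j = n then 0 else Suc j)"
  by auto

lemma cyc_adj:
  assumes "distinct vs" "a < length vs" "b < length vs"
  shows "{vs!a, vs!b} \<in> cycle_edges vs \<longleftrightarrow> (b = Suc a mod length vs \<or> a = Suc b mod length vs)"
proof -
  have lt: "\<And>k. k < length vs \<Longrightarrow> Suc k mod length vs < length vs" by (rule mod_lt)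
  have eq: "\<And>i j. i < length vs \<Longrightarrow> j < length vs \<Longrightarrow> vs!i = vs!j \<longleftrightarrow> i = j"
    using assms(1) nth_eq_iff_index_eq by blast
  have "{vs!a, vs!b} \<in> cycle_edges vs \<longleftrightarrow> (\<exists>i<length vs. (a = i \<and> b = Suc i mod length vs) \<or> (a = Suc i mod length vs \<and> b = i))"
  proof -
    have "\<And>i. i < length vs \<Longrightarrow> {vs!a, vs!b} = {vs!i, vs!(Suc i mod length vs)} \<longleftrightarrow> ((a = i \<and> b = Suc i mod length vs) \<or> (a = Suc i mod length vs \<and> b = i))"
      unfolding doubleton_eq_iff using eq lt assms(2,3) by meson
    then show ?thesis unfolding cycle_edges_def by blast
  qed
  also have "\<dots> \<longleftrightarrow> (b = Suc a mod length vs \<or> a = Suc b mod length vs)"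
    using assms(2,3) by blast
  finally show ?thesis .
qed

lemma path_adj:
  assumes "distinct ps" "a < length ps" "b < length ps"
  shows "{ps!a, ps!b} \<in> path_edges ps \<longleftrightarrow> (b = Suc a \<or> a = Suc b)"
proof -
  have eq: "\<And>i j. i < length ps \<Longrightarrow> j < length ps \<Longrightarrow> ps!i = ps!j \<longleftrightarrow> i = j"
    using assms(1) nth_eq_iff_index_eq by blast
  have "{ps!a, ps!b} \<in> path_edges ps \<longleftrightarrow> (\<exists>i. Suc i < length ps \<and> ((a = i \<and> b = Suc i) \<or> (a = Suc i \<and> b = i)))"
  proof -
    have "\<And>i. Suc i < length ps \<Longrightarrow> {ps!a, ps!b} = {ps!i, ps!Suc i} \<longleftrightarrow> ((a = i \<and> b = Suc i) \<or> (a = Suc i \<and> b = i))"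
      unfolding doubleton_eq_iff using eq assms(2,3) by (meson Suc_lessD)
    then show ?thesis unfolding path_edges_def by blast
  qed
  also have "\<dots> \<longleftrightarrow> (b = Suc a \<or> a = Suc b)"
    using assms(2,3) by auto
  finally show ?thesis .
qed

lemma path_sub: "e \<in> path_edges ps \<Longrightarrow> e \<subseteq> set ps"
  unfolding path_edges_def by auto

lemma cyc_sub: "e \<in> cycle_edges vs \<Longrightarrow> vs \<noteq> [] \<Longrightarrow> e \<subseteq> set vs"
  unfolding cycle_edges_def by auto

lemma gate_inv: "gate V E \<Longrightarrow> edges_ok V E \<and> V \<noteq> {}"
proof (induction rule: gate.induct)
  case (cycle vs)
  have "edges_ok (set vs) (cycle_edges vs)" unfolding edges_ok_def cycle_edges_def
  proof safe
    fix i assume i: "i < length vs"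
    have n1: "Suc i mod length vs \<noteq> i" unfolding suc_mod[OF i] using cycle(2) i by auto
    have n2: "Suc i mod length vs < length vs" using i by (rule mod_lt)
    have ne: "vs!i \<noteq> vs ! (Suc i mod length vs)" using nth_eq_iff_index_eq[OF cycle(1) i n2] n1 by simp
    have "vs!i \<in> set vs" "vs ! (Suc i mod length vs) \<in> set vs" using i n2 by (simp_all add: nth_mem)
    then show "\<exists>x y. {vs ! i, vs ! (Suc i mod length vs)} = {x, y} \<and> x \<noteq> y \<and> x \<in> set vs \<and> y \<in> set vs"
      using ne by blast
  qed
  then show ?case using cycle by auto
next
  case (extend V E C C' ps)
  have ne: "ps \<noteq> []" using extend by auto
  have hP: "hd ps \<in> set ps" "last ps \<in> set ps" using ne by auto
  have CV: "C \<subseteq> V" "C' \<subseteq> V" using clique_sub[OF extend(2)] clique_sub[OF extend(3)] by auto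
  have "edges_ok (V \<union> set ps) (E \<union> path_edges ps \<union> {{hd ps, c} | c. c \<in> C} \<union> {{last ps, c} | c. c \<in> C'})"
    unfolding edges_ok_def
  proof safe
    fix e assume "e \<in> E" then show "\<exists>x y. e = {x, y} \<and> x \<noteq> y \<and> x \<in> V \<union> set ps \<and> y \<in> V \<union> set ps"
      using extend.IH unfolding edges_ok_def by blast
  next
    fix e assume "e \<in> path_edges ps"
    then obtain i where i: "Suc i < length ps" "e = {ps!i, ps!Suc i}" unfolding path_edges_def by auto
    then have ne: "ps!i \<noteq> ps!Suc i" using nth_eq_iff_index_eq[OF extend(5), of i "Suc i"] by simp
    have "ps!i \<in> set ps" "ps!Suc i \<in> set ps" using i by (simp_all add: nth_mem)
    then show "\<exists>x y. e = {x, y} \<and> x \<noteq> y \<and> x \<in> V \<union> set ps \<and> y \<in> V \<union> set ps"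
      using i ne by blast
  next
    fix c assume "c \<in> C" then show "\<exists>x y. {hd ps, c} = {x, y} \<and> x \<noteq> y \<and> x \<in> V \<union> set ps \<and> y \<in> V \<union> set ps"
      using hP CV extend(7) by blast
  next
    fix c assume "c \<in> C'" then show "\<exists>x y. {last ps, c} = {x, y} \<and> x \<noteq> y \<and> x \<in> V \<union> set ps \<and> y \<in> V \<union> set ps"
      using hP CV extend(7) by blast
  qed
  then show ?case using extend by auto
qed

lemma cycle_case:
  assumes d: "distinct vs" and n4: "length vs \<ge> 4" and v: "v \<in> set vs"
  shows "\<exists>C1 C2. C1 \<noteq> C2 \<and> {C. is_clique (set vs) (cycle_edges vs) C \<and> v \<in> C} = {C1, C2} \<and> C1 \<inter> C2 = {v}"
proof -
  define n where "n = length vs"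
  obtain i where i: "i < n" "v = vs!i" using v unfolding n_def by (metis in_set_conv_nth)
  define s where "s = Suc i mod n"
  define p where "p = (if i = 0 then n - 1 else i - 1)"
  have sn: "s < n" unfolding s_def using i(1) by (rule mod_lt)
  have pn: "p < n" unfolding p_def using i by auto
  have ok: "edges_ok (set vs) (cycle_edges vs)" using gate_inv[OF gate.cycle[OF d n4]] by blast
  have eq: "\<And>a b. a < n \<Longrightarrow> b < n \<Longrightarrow> vs!a = vs!b \<longleftrightarrow> a = b"
    using d nth_eq_iff_index_eq unfolding n_def by blast
  have sp: "s \<noteq> p" unfolding s_def p_def suc_mod[OF i(1)] using i n4 unfolding n_def by auto
  have N: "\<And>u. {vs!i, u} \<in> cycle_edges vs \<longleftrightarrow> u \<in> insert (vs!s) {vs!p}"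
  proof -
    fix u
    show "{vs!i, u} \<in> cycle_edges vs \<longleftrightarrow> u \<in> insert (vs!s) {vs!p}"
    proof (cases "u \<in> set vs")
      case True
      then obtain j where j: "j < n" "u = vs!j" unfolding n_def by (metis in_set_conv_nth)
      have "{vs!i, u} \<in> cycle_edges vs \<longleftrightarrow> (j = Suc i mod n \<or> i = Suc j mod n)"
        using cyc_adj[OF d, of i j] i j unfolding n_def by simp
      also have "\<dots> \<longleftrightarrow> (j = s \<or> j = p)"
        unfolding s_def p_def suc_mod[OF i(1)] suc_mod[OF j(1)] using i j n4 unfolding n_def by auto
      also have "\<dots> \<longleftrightarrow> u \<in> insert (vs!s) {vs!p}" using eq j sn pn by auto
      finally show ?thesis .
    next
      case False
      then show ?thesis using edges_okD[OF ok, of "vs!i" u] sn pn unfolding n_def by auto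
    qed
  qed
  have bnot: "{vs!p, vs!s} \<notin> cycle_edges vs"
  proof -
    have "\<not> (s = Suc p mod n \<or> p = Suc s mod n)"
      unfolding suc_mod[OF pn] suc_mod[OF sn]
      using i n4 unfolding n_def s_def p_def suc_mod[OF i(1)[unfolded n_def]] by auto
    then show ?thesis using cyc_adj[OF d, of p s] pn sn unfolding n_def by simp
  qed
  have "vs!s \<notin> {vs!p}" using eq sn pn sp by auto
  moreover have "vs!i \<in> set vs" using i unfolding n_def by simp
  ultimately show ?thesis
    using star[OF ok _ N] bnot i(2) by auto
qed

lemma ext_case:
  fixes V :: "'a set" and E C C' ps v
  defines "V' \<equiv> V \<union> set ps"
    and "E' \<equiv> E \<union> path_edges ps \<union> {{hd ps, c} | c. c \<in> C} \<union> {{last ps, c} | c. c \<in> C'}"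
  assumes g: "gate V E"
    and IH: "\<And>v. v \<in> V \<Longrightarrow> \<exists>D1 D2. D1 \<noteq> D2 \<and> {D. is_clique V E D \<and> v \<in> D} = {D1, D2} \<and> D1 \<inter> D2 = {v}"
    and cC: "is_clique V E C" and cC': "is_clique V E C'" and disj: "C \<inter> C' = {}"
    and d: "distinct ps" and l2: "length ps \<ge> 2" and PV: "set ps \<inter> V = {}"
    and v: "v \<in> V'"
  shows "\<exists>C1 C2. C1 \<noteq> C2 \<and> {K. is_clique V' E' K \<and> v \<in> K} = {C1, C2} \<and> C1 \<inter> C2 = {v}"
proof -
  define P where "P = set ps"
  define h where "h = hd ps"
  define l where "l = last ps"
  define m where "m = length ps"
  have g': "gate V' E'" unfolding V'_def E'_def using gate.extend[OF g cC cC' disj d l2 PV] .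
  have ok: "edges_ok V E" and Vne: "V \<noteq> {}" using gate_inv[OF g] by auto
  have ok': "edges_ok V' E'" using gate_inv[OF g'] by auto
  have ne: "ps \<noteq> []" using l2 by auto
  have hn: "h = ps!0" unfolding h_def using ne by (simp add: hd_conv_nth)
  have ln: "l = ps!(m-1)" unfolding l_def m_def using ne by (simp add: last_conv_nth)
  have eqp: "\<And>a b. a < m \<Longrightarrow> b < m \<Longrightarrow> ps!a = ps!b \<longleftrightarrow> a = b"
    using d nth_eq_iff_index_eq unfolding m_def by blast
  have m2: "m \<ge> 2" using l2 unfolding m_def .
  have hl: "h \<noteq> l" using hn ln eqp m2 by auto
  have hP: "h \<in> P" "l \<in> P" unfolding P_def h_def l_def using ne by auto
  have hV: "h \<notin> V" "l \<notin> V" using hP PV unfolding P_def by auto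
  have CV: "C \<subseteq> V" "C' \<subseteq> V" using clique_sub[OF cC] clique_sub[OF cC'] .
  have PV': "\<And>x. x \<in> P \<Longrightarrow> x \<notin> V" using PV unfolding P_def by auto
  have E'eq: "E' = E \<union> path_edges ps \<union> {{h, c} | c. c \<in> C} \<union> {{l, c} | c. c \<in> C'}"
    unfolding E'_def h_def l_def ..
  have V'eq: "V' = V \<union> P" unfolding V'_def P_def ..
  have EE': "E \<subseteq> E'" unfolding E'eq by auto
  have F1: "\<And>x y. x \<in> V \<Longrightarrow> y \<in> V \<Longrightarrow> {x,y} \<in> E' \<longleftrightarrow> {x,y} \<in> E"
  proof
    fix x y assume xy: "x \<in> V" "y \<in> V" "{x,y} \<in> E'"
    have "{x,y} \<notin> path_edges ps" using path_sub xy PV by blast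
    moreover have "{x,y} \<notin> {{h, c} | c. c \<in> C}" using xy hV by (auto simp: doubleton_eq_iff)
    moreover have "{x,y} \<notin> {{l, c} | c. c \<in> C'}" using xy hV by (auto simp: doubleton_eq_iff)
    ultimately show "{x,y} \<in> E" using xy(3) unfolding E'eq by blast
  qed (use EE' in blast)
  have F2: "\<And>x y. x \<in> V \<Longrightarrow> y \<in> P \<Longrightarrow> {x,y} \<in> E' \<longleftrightarrow> (y = h \<and> x \<in> C) \<or> (y = l \<and> x \<in> C')"
  proof
    fix x y assume xy: "x \<in> V" "y \<in> P" "{x,y} \<in> E'"
    have "{x,y} \<notin> E" using edges_okD[OF ok, of x y] xy PV' by blast
    moreover have "{x,y} \<notin> path_edges ps" using path_sub xy PV by blast
    ultimately have "{x,y} \<in> {{h, c} | c. c \<in> C} \<or> {x,y} \<in> {{l, c} | c. c \<in> C'}" using xy(3) unfolding E'eq by blast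
    then show "(y = h \<and> x \<in> C) \<or> (y = l \<and> x \<in> C')" using xy hV by (auto simp: doubleton_eq_iff)
  next
    fix x y assume xy: "x \<in> V" "y \<in> P" "(y = h \<and> x \<in> C) \<or> (y = l \<and> x \<in> C')"
    then show "{x,y} \<in> E'" unfolding E'eq by (auto simp: insert_commute)
  qed
  have F3: "\<And>x y. x \<in> P \<Longrightarrow> y \<in> P \<Longrightarrow> {x,y} \<in> E' \<longleftrightarrow> {x,y} \<in> path_edges ps"
  proof
    fix x y assume xy: "x \<in> P" "y \<in> P" "{x,y} \<in> E'"
    have "{x,y} \<notin> E" using edges_okD[OF ok, of x y] xy PV' by blast
    moreover have "{x,y} \<notin> {{h, c} | c. c \<in> C}" using xy CV PV' by (auto simp: doubleton_eq_iff)
    moreover have "{x,y} \<notin> {{l, c} | c. c \<in> C'}" using xy CV PV' by (auto simp: doubleton_eq_iff)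
    ultimately show "{x,y} \<in> path_edges ps" using xy(3) unfolding E'eq by blast
  qed (unfold E'eq, blast)
  have comm: "\<And>x y. {x,y} = {y,x}" by (rule insert_commute)
  have okD': "\<And>x y. {x,y} \<in> E' \<Longrightarrow> x \<noteq> y \<and> x \<in> V' \<and> y \<in> V'" using edges_okD[OF ok'] by blast
  have inP: "\<And>j. j < m \<Longrightarrow> ps!j \<in> P" unfolding P_def m_def by simp
  have NP: "\<And>i j. i < m \<Longrightarrow> j < m \<Longrightarrow> {ps!i, ps!j} \<in> E' \<longleftrightarrow> (j = Suc i \<or> i = Suc j)"
  proof -
    fix i j assume ij: "i < m" "j < m"
    have "{ps!i, ps!j} \<in> E' \<longleftrightarrow> {ps!i, ps!j} \<in> path_edges ps" by (rule F3[OF inP[OF ij(1)] inP[OF ij(2)]])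
    also have "\<dots> \<longleftrightarrow> (j = Suc i \<or> i = Suc j)" using path_adj[OF d] ij unfolding m_def by blast
    finally show "{ps!i, ps!j} \<in> E' \<longleftrightarrow> (j = Suc i \<or> i = Suc j)" .
  qed
  have Pnth: "\<And>u. u \<in> P \<Longrightarrow> \<exists>j<m. u = ps!j" unfolding P_def m_def by (metis in_set_conv_nth)
  have Ccomp: "\<forall>x\<in>C. \<forall>y\<in>C. x \<noteq> y \<longrightarrow> {x,y} \<in> E'" and C'comp: "\<forall>x\<in>C'. \<forall>y\<in>C'. x \<noteq> y \<longrightarrow> {x,y} \<in> E'"
  proof -
    show "\<forall>x\<in>C. \<forall>y\<in>C. x \<noteq> y \<longrightarrow> {x,y} \<in> E'" using cC EE' unfolding is_clique_def complete_set_def by blast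
    show "\<forall>x\<in>C'. \<forall>y\<in>C'. x \<noteq> y \<longrightarrow> {x,y} \<in> E'" using cC' EE' unfolding is_clique_def complete_set_def by blast
  qed
  obtain x0 where x0: "x0 \<in> V" using Vne by blast
  have Cne: "C \<noteq> {}" "C' \<noteq> {}" using clique_ne[OF cC x0] clique_ne[OF cC' x0] .
  show ?thesis
  proof (cases "v \<in> P")
    case True
    then obtain i where i: "i < m" "v = ps!i" using Pnth by blast
    have vV': "v \<in> V'" using v .
    consider "i = 0" | "i = m - 1" | "0 < i \<and> i < m - 1" using i by linarith
    then show ?thesis
    proof cases
      case 1
      have vh: "v = h" using i 1 hn by simp
      have b1: "ps!1 \<in> P" "ps!1 \<noteq> h"
      proof -
        show "ps!1 \<in> P" using inP[of 1] m2 by simp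
        show "ps!1 \<noteq> h" unfolding hn using eqp[of 1 0] m2 by simp
      qed
      have N: "\<And>u. {v,u} \<in> E' \<longleftrightarrow> u \<in> insert (ps!1) C"
      proof -
        fix u
        consider "u \<in> V" | "u \<in> P" | "u \<notin> V'" unfolding V'eq by blast
        then show "{v,u} \<in> E' \<longleftrightarrow> u \<in> insert (ps!1) C"
        proof cases
          case 1
          then show ?thesis using F2[OF 1 hP(1)] vh hl comm[of u h] b1 PV' by auto
        next
          case 2
          then obtain j where j: "j < m" "u = ps!j" using Pnth by blast
          have "{v,u} \<in> E' \<longleftrightarrow> j = 1" using NP[OF i(1) j(1)] i 1 j by auto
          also have "\<dots> \<longleftrightarrow> u \<in> insert (ps!1) C" using eqp[OF j(1), of 1] m2 j 2 CV PV' by auto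
          finally show ?thesis .
        next
          case 3
          then show ?thesis using okD'[of v u] b1 CV unfolding V'eq by auto
        qed
      qed
      have bnot: "\<forall>a\<in>C. {a, ps!1} \<notin> E'"
        using F2 b1 CV disj by blast
      have "ps!1 \<notin> C" using b1 CV PV' by auto
      then show ?thesis using star[OF ok' vV' N _ Cne(1) Ccomp bnot] by blast
    next
      case 2
      have vl: "v = l" using i 2 ln by simp
      have b1: "ps!(m-2) \<in> P" "ps!(m-2) \<noteq> l"
      proof -
        show "ps!(m-2) \<in> P" using inP[of "m-2"] m2 by simp
        show "ps!(m-2) \<noteq> l" unfolding ln using eqp[of "m-2" "m-1"] m2 by simp
      qed
      have N: "\<And>u. {v,u} \<in> E' \<longleftrightarrow> u \<in> insert (ps!(m-2)) C'"
      proof -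
        fix u
        consider "u \<in> V" | "u \<in> P" | "u \<notin> V'" unfolding V'eq by blast
        then show "{v,u} \<in> E' \<longleftrightarrow> u \<in> insert (ps!(m-2)) C'"
        proof cases
          case 1
          then show ?thesis using F2[OF 1 hP(2)] vl hl comm[of u l] b1 PV' by auto
        next
          case 2
          then obtain j where j: "j < m" "u = ps!j" using Pnth by blast
          have "{v,u} \<in> E' \<longleftrightarrow> j = m - 2" using NP[OF i(1) j(1)] i \<open>i = m - 1\<close> j m2 by auto
          also have "\<dots> \<longleftrightarrow> u \<in> insert (ps!(m-2)) C'" using eqp[OF j(1), of "m-2"] m2 j 2 CV PV' by auto
          finally show ?thesis .
        qed (use okD'[of v u] b1 CV in \<open>auto simp: V'eq\<close>)
      qed
      have bnot: "\<forall>a\<in>C'. {a, ps!(m-2)} \<notin> E'"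
        using F2 b1 CV disj by blast
      have "ps!(m-2) \<notin> C'" using b1 CV PV' by auto
      then show ?thesis using star[OF ok' vV' N _ Cne(2) C'comp bnot] by blast
    next
      case 3
      have bs: "ps!(Suc i) \<in> P" "ps!(i-1) \<in> P" using inP 3 by auto
      have vnot: "v \<noteq> h" "v \<noteq> l"
      proof -
        show "v \<noteq> h" unfolding hn i(2) using eqp[of i 0] 3 i(1) by simp
        show "v \<noteq> l" unfolding ln i(2) using eqp[of i "m-1"] 3 i(1) by simp
      qed
      have N: "\<And>u. {v,u} \<in> E' \<longleftrightarrow> u \<in> insert (ps!(Suc i)) {ps!(i-1)}"
      proof -
        fix u
        consider "u \<in> V" | "u \<in> P" | "u \<notin> V'" unfolding V'eq by blast
        then show "{v,u} \<in> E' \<longleftrightarrow> u \<in> insert (ps!(Suc i)) {ps!(i-1)}"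
        proof cases
          case 1
          then show ?thesis using F2[OF 1 True] vnot comm[of u v] bs PV' by auto
        next
          case 2
          then obtain j where j: "j < m" "u = ps!j" using Pnth by blast
          have "{v,u} \<in> E' \<longleftrightarrow> (j = Suc i \<or> j = i - 1)" using NP[OF i(1) j(1)] i 3 j by auto
          also have "\<dots> \<longleftrightarrow> u \<in> insert (ps!(Suc i)) {ps!(i-1)}" proof -
            have "i - 1 < m" using 3 by linarith
            then show ?thesis using eqp[OF j(1), of "Suc i"] eqp[OF j(1), of "i-1"] 3 j(2) by (simp add: less_diff_conv)
          qed
          finally show ?thesis .
        qed (use okD'[of v u] bs in \<open>auto simp: V'eq\<close>)
      qed
      have bnot: "\<forall>a\<in>{ps!(i-1)}. {a, ps!(Suc i)} \<notin> E'"
      proof -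
        have "i - 1 < m" "Suc i < m" using 3 by linarith+
        then show ?thesis using NP[of "i-1" "Suc i"] 3 by auto
      qed
      have "ps!(Suc i) \<notin> {ps!(i-1)}"
      proof -
        have "i - 1 < m" "Suc i < m" using 3 by linarith+
        then show ?thesis using eqp[of "Suc i" "i-1"] 3 by auto
      qed
      then show ?thesis using star[OF ok' vV' N] bnot by auto
    qed
  next
    case False
    then have vV: "v \<in> V" using v unfolding V'eq by blast
    obtain D1 D2 where D: "D1 \<noteq> D2" "{D. is_clique V E D \<and> v \<in> D} = {D1, D2}" "D1 \<inter> D2 = {v}"
      using IH[OF vV] by (elim exE conjE) (rule that)
    define f where "f D = (if D = C then insert h C else if D = C' then insert l C' else D)" for D
    have CC': "C \<noteq> C'" using disj Cne by auto
    have VV': "V \<subseteq> V'" unfolding V'eq by blast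
    have compON: "\<And>S. complete_set V E S \<Longrightarrow> complete_set V' E' S"
      using VV' EE' unfolding complete_set_def by blast
    have compNO: "\<And>S. complete_set V' E' S \<Longrightarrow> S \<subseteq> V \<Longrightarrow> complete_set V E S"
    proof -
      fix S assume S: "complete_set V' E' S" "S \<subseteq> V"
      show "complete_set V E S" unfolding complete_set_def
      proof (intro conjI ballI impI)
        show "S \<subseteq> V" using S(2) .
        fix x y assume "x \<in> S" "y \<in> S" "x \<noteq> y"
        then have "{x,y} \<in> E'" using S(1) unfolding complete_set_def by blast
        then show "{x,y} \<in> E" using F1[of x y] S(2) \<open>x \<in> S\<close> \<open>y \<in> S\<close> by blast
      qed
    qed
    have hCc: "complete_set V' E' (insert h C)"
      unfolding complete_set_def
    proof (intro conjI ballI impI)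
      show "insert h C \<subseteq> V'" using hP CV unfolding V'eq by blast
      fix x y assume xy: "x \<in> insert h C" "y \<in> insert h C" "x \<noteq> y"
      show "{x,y} \<in> E'"
      proof -
        have "x = h \<and> y \<in> C \<or> y = h \<and> x \<in> C \<or> x \<in> C \<and> y \<in> C" using xy by auto
        then show ?thesis
        proof (elim disjE conjE)
          assume "x = h" "y \<in> C" then show ?thesis unfolding E'eq by blast
        next
          assume "y = h" "x \<in> C" then have "{x,y} = {h,x}" by (simp add: insert_commute)
          then show ?thesis using \<open>x \<in> C\<close> unfolding E'eq by blast
        next
          assume "x \<in> C" "y \<in> C" then show ?thesis using Ccomp xy(3) by blast
        qed
      qed
    qed
    have lCc: "complete_set V' E' (insert l C')"
      unfolding complete_set_def
    proof (intro conjI ballI impI)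
      show "insert l C' \<subseteq> V'" using hP CV unfolding V'eq by blast
      fix x y assume xy: "x \<in> insert l C'" "y \<in> insert l C'" "x \<noteq> y"
      show "{x,y} \<in> E'"
      proof -
        have "x = l \<and> y \<in> C' \<or> y = l \<and> x \<in> C' \<or> x \<in> C' \<and> y \<in> C'" using xy by auto
        then show ?thesis
        proof (elim disjE conjE)
          assume "x = l" "y \<in> C'" then show ?thesis unfolding E'eq by blast
        next
          assume "y = l" "x \<in> C'" then have "{x,y} = {l,x}" by (simp add: insert_commute)
          then show ?thesis using \<open>x \<in> C'\<close> unfolding E'eq by blast
        next
          assume "x \<in> C'" "y \<in> C'" then show ?thesis using C'comp xy(3) by blast
        qed
      qed
    qed
    have vadj: "\<And>x. x \<in> P \<Longrightarrow> {v,x} \<in> E' \<Longrightarrow> (x = h \<and> v \<in> C) \<or> (x = l \<and> v \<in> C')"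
      using F2[OF vV] by simp
    have cpl: "\<And>S x y. complete_set V' E' S \<Longrightarrow> x \<in> S \<Longrightarrow> y \<in> S \<Longrightarrow> x \<noteq> y \<Longrightarrow> {x,y} \<in> E'"
      unfolding complete_set_def by blast
    have cplV: "\<And>S. complete_set V' E' S \<Longrightarrow> S \<subseteq> V \<union> P"
      unfolding complete_set_def V'eq by blast
    have cl_f: "\<And>D. is_clique V E D \<Longrightarrow> v \<in> D \<Longrightarrow> is_clique V' E' (f D)"
    proof -
      fix D assume cD: "is_clique V E D" and vD: "v \<in> D"
      have DV: "D \<subseteq> V" using clique_sub[OF cD] .
      show "is_clique V' E' (f D)"
      proof (cases "D = C")
        case True
        then have vC: "v \<in> C" using vD by simp
        have "is_clique V' E' (insert h C)" unfolding is_clique_def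
        proof (intro conjI allI impI hCc)
          fix S assume S: "complete_set V' E' S \<and> insert h C \<subseteq> S"
          have "S \<subseteq> insert h C"
          proof
            fix x assume xS: "x \<in> S"
            show "x \<in> insert h C"
            proof (rule ccontr)
              assume xn: "x \<notin> insert h C"
              have "x \<in> V \<or> x \<in> P" using cplV S xS by blast
              then show False
              proof
                assume xV: "x \<in> V"
                have "{x,h} \<in> E'" using cpl[of S x h] S xS xn by auto
                then show False using F2[OF xV hP(1)] hl xn by auto
              next
                assume xP: "x \<in> P"
                have "x \<noteq> v" using xP vV PV' by blast
                then have "{v,x} \<in> E'" using cpl[of S v x] S xS vC by auto
                then show False using vadj[OF xP] xn vC disj by auto
              qed
            qed
          qed
          then show "S = insert h C" using S by blast
        qed
        then show ?thesis using True unfolding f_def by simp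
      next
        case notC: False
        show ?thesis
        proof (cases "D = C'")
          case True
          then have vC: "v \<in> C'" using vD by simp
          have "is_clique V' E' (insert l C')" unfolding is_clique_def
          proof (intro conjI allI impI lCc)
            fix S assume S: "complete_set V' E' S \<and> insert l C' \<subseteq> S"
            have "S \<subseteq> insert l C'"
            proof
              fix x assume xS: "x \<in> S"
              show "x \<in> insert l C'"
              proof (rule ccontr)
                assume xn: "x \<notin> insert l C'"
                have "x \<in> V \<or> x \<in> P" using cplV S xS by blast
                then show False
                proof
                  assume xV: "x \<in> V"
                  have "{x,l} \<in> E'" using cpl[of S x l] S xS xn by auto
                  then show False using F2[OF xV hP(2)] hl xn by auto
                next
                  assume xP: "x \<in> P"
                  have "x \<noteq> v" using xP vV PV' by blast
                  then have "{v,x} \<in> E'" using cpl[of S v x] S xS vC by auto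
                  then show False using vadj[OF xP] xn vC disj by auto
                qed
              qed
            qed
            then show "S = insert l C'" using S by blast
          qed
          then show ?thesis using True notC unfolding f_def by simp
        next
          case notC': False
          have fD: "f D = D" using notC notC' unfolding f_def by simp
          have "is_clique V' E' D" unfolding is_clique_def
          proof (intro conjI allI impI)
            show cD': "complete_set V' E' D" using compON cD unfolding is_clique_def by blast
            fix S assume S: "complete_set V' E' S \<and> D \<subseteq> S"
            have SV: "S \<subseteq> V"
            proof
              fix x assume xS: "x \<in> S"
              show "x \<in> V"
              proof (rule ccontr)
                assume xn: "x \<notin> V"
                then have xP: "x \<in> P" using cplV S xS by blast
                have "x \<noteq> v" using xn vV by blast
                then have "{v,x} \<in> E'" using cpl[of S v x] S xS vD by auto
                then have "(x = h \<and> v \<in> C) \<or> (x = l \<and> v \<in> C')" using vadj[OF xP] by blast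
                then show False
                proof
                  assume a: "x = h \<and> v \<in> C"
                  have "D \<subseteq> C"
                  proof
                    fix d assume dD: "d \<in> D"
                    have "d \<noteq> h" using dD DV hV by blast
                    then have "{d,h} \<in> E'" using cpl[of S d h] S xS a dD by auto
                    then show "d \<in> C" using F2[OF _ hP(1), of d] dD DV hl by auto
                  qed
                  then have "C = D" using cD cC unfolding is_clique_def by blast
                  then show False using notC by simp
                next
                  assume a: "x = l \<and> v \<in> C'"
                  have "D \<subseteq> C'"
                  proof
                    fix d assume dD: "d \<in> D"
                    have "d \<noteq> l" using dD DV hV by blast
                    then have "{d,l} \<in> E'" using cpl[of S d l] S xS a dD by auto
                    then show "d \<in> C'" using F2[OF _ hP(2), of d] dD DV hl by auto
                  qed
                  then have "C' = D" using cD cC' unfolding is_clique_def by blast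
                  then show False using notC' by simp
                qed
              qed
            qed
            have "complete_set V E S" using compNO S SV by blast
            then show "S = D" using cD S unfolding is_clique_def by blast
          qed
          then show ?thesis using fD by simp
        qed
      qed
    qed
    have cl_back: "\<And>K. is_clique V' E' K \<Longrightarrow> v \<in> K \<Longrightarrow> \<exists>D. is_clique V E D \<and> v \<in> D \<and> K = f D"
    proof -
      fix K assume cK: "is_clique V' E' K" and vK: "v \<in> K"
      have Kc: "complete_set V' E' K" using cK unfolding is_clique_def by blast
      have Kmax: "\<And>S. complete_set V' E' S \<Longrightarrow> K \<subseteq> S \<Longrightarrow> S = K" using cK unfolding is_clique_def by blast
      have KP: "\<And>x. x \<in> K \<Longrightarrow> x \<in> P \<Longrightarrow> (x = h \<and> v \<in> C) \<or> (x = l \<and> v \<in> C')"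
      proof -
        fix x assume x: "x \<in> K" "x \<in> P"
        have "x \<noteq> v" using x vV PV' by blast
        then have "{v,x} \<in> E'" using cpl[OF Kc vK x(1)] by blast
        then show "(x = h \<and> v \<in> C) \<or> (x = l \<and> v \<in> C')" using vadj[OF x(2)] by blast
      qed
      show "\<exists>D. is_clique V E D \<and> v \<in> D \<and> K = f D"
      proof (cases "h \<in> K")
        case True
        then have vC: "v \<in> C" using KP hP(1) hl by blast
        have "K \<subseteq> insert h C"
        proof
          fix x assume xK: "x \<in> K"
          have "x \<in> V \<or> x \<in> P" using cplV Kc xK by blast
          then show "x \<in> insert h C"
          proof
            assume xV: "x \<in> V"
            then have "x \<noteq> h" using hV by blast
            then have "{x,h} \<in> E'" using cpl[OF Kc xK True] by blast
            then show ?thesis using F2[OF xV hP(1)] hl by auto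
          next
            assume xP: "x \<in> P"
            then show ?thesis using KP[OF xK xP] vC disj by auto
          qed
        qed
        then have "insert h C = K" using Kmax hCc by blast
        then show ?thesis using cC vC unfolding f_def by auto
      next
        case noh: False
        show ?thesis
        proof (cases "l \<in> K")
          case True
          then have vC: "v \<in> C'" using KP hP(2) hl by blast
          have "K \<subseteq> insert l C'"
          proof
            fix x assume xK: "x \<in> K"
            have "x \<in> V \<or> x \<in> P" using cplV Kc xK by blast
            then show "x \<in> insert l C'"
            proof
              assume xV: "x \<in> V"
              then have "x \<noteq> l" using hV by blast
              then have "{x,l} \<in> E'" using cpl[OF Kc xK True] by blast
              then show ?thesis using F2[OF xV hP(2)] hl by auto
            next
              assume xP: "x \<in> P"
              then show ?thesis using KP[OF xK xP] vC disj by auto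
            qed
          qed
          then have "insert l C' = K" using Kmax lCc by blast
          then show ?thesis using cC' vC CC' unfolding f_def by auto
        next
          case nol: False
          have KV: "K \<subseteq> V"
          proof
            fix x assume xK: "x \<in> K"
            have "x \<in> V \<or> x \<in> P" using cplV Kc xK by blast
            then show "x \<in> V" using KP[OF xK] noh nol xK by blast
          qed
          have cKo: "is_clique V E K" unfolding is_clique_def
          proof (intro conjI allI impI)
            show "complete_set V E K" using compNO Kc KV by blast
            fix S assume "complete_set V E S \<and> K \<subseteq> S"
            then show "S = K" using Kmax compON by blast
          qed
          have "K \<noteq> C"
          proof
            assume "K = C"
            then have "insert h C = K" using Kmax hCc by blast
            then show False using noh by blast
          qed
          moreover have "K \<noteq> C'"
          proof
            assume "K = C'"
            then have "insert l C' = K" using Kmax lCc by blast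
            then show False using nol by blast
          qed
          ultimately have "f K = K" unfolding f_def by simp
          then show ?thesis using cKo vK by metis
        qed
      qed
    qed
    have mm: "D1 \<in> {D. is_clique V E D \<and> v \<in> D}" "D2 \<in> {D. is_clique V E D \<and> v \<in> D}"
      unfolding D(2) by simp_all
    have D12: "is_clique V E D1" "v \<in> D1" "is_clique V E D2" "v \<in> D2" using mm by simp_all
    have fsub: "\<And>D. D \<subseteq> f D" unfolding f_def by auto
    have fV: "\<And>D. D \<subseteq> V \<Longrightarrow> f D \<inter> V = D" unfolding f_def using hV CV by auto
    have fout: "\<And>D x. x \<in> f D \<Longrightarrow> x \<notin> V \<Longrightarrow> D \<subseteq> V \<Longrightarrow> (D = C \<and> x = h) \<or> (D = C' \<and> D \<noteq> C \<and> x = l)"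
      unfolding f_def by (auto split: if_splits)
    have DV12: "D1 \<subseteq> V" "D2 \<subseteq> V" using clique_sub D12 by blast+
    have "{K. is_clique V' E' K \<and> v \<in> K} = {f D1, f D2}"
    proof (intro equalityI subsetI)
      fix K assume "K \<in> {K. is_clique V' E' K \<and> v \<in> K}"
      then obtain D0 where "is_clique V E D0" "v \<in> D0" "K = f D0" using cl_back by blast
      then have "D0 \<in> {D. is_clique V E D \<and> v \<in> D}" "K = f D0" by simp_all
      then have "D0 \<in> {D1, D2}" "K = f D0" unfolding D(2) by simp_all
      then show "K \<in> {f D1, f D2}" by auto
    next
      fix K assume "K \<in> {f D1, f D2}"
      then show "K \<in> {K. is_clique V' E' K \<and> v \<in> K}" using cl_f D12 fsub by blast
    qed
    moreover have "f D1 \<noteq> f D2" using fV DV12 D(1) by metis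
    moreover have "f D1 \<inter> f D2 = {v}"
    proof (intro equalityI subsetI)
      fix x assume x: "x \<in> f D1 \<inter> f D2"
      show "x \<in> {v}"
      proof (cases "x \<in> V")
        case True
        then have "x \<in> D1 \<inter> D2" using x fV DV12 by blast
        then show ?thesis using D(3) by blast
      next
        case False
        then show ?thesis using fout[of x D1] fout[of x D2] x DV12 D(1) hl by blast
      qed
    next
      fix x assume "x \<in> {v}"
      then show "x \<in> f D1 \<inter> f D2" using fsub D12 by blast
    qed
    ultimately show ?thesis by blast
  qed
qed

lemma main_ind: "gate V E \<Longrightarrow> v \<in> V \<Longrightarrow> \<exists>C1 C2. C1 \<noteq> C2 \<and> {C. is_clique V E C \<and> v \<in> C} = {C1, C2} \<and> C1 \<inter> C2 = {v}"
proof (induction V E arbitrary: v rule: gate.induct)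
  case (cycle vs)
  show ?case by (rule cycle_case[OF cycle.hyps cycle.prems])
next
  case (extend V E C C' ps)
  show ?case
    by (rule ext_case[OF extend.hyps(1) extend.IH extend.hyps(2-7) extend.prems])
qed

theorem lemma5:
  assumes "gate V E" and "v \<in> V"
  shows "\<exists>C1 C2. C1 \<noteq> C2 \<and> {C. is_clique V E C \<and> v \<in> C} = {C1, C2} \<and> C1 \<inter> C2 = {v}"
  using main_ind[OF assms] .

end
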